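(* If $\Gamma\vdash t:A$ is derivable in the simply typed distributive $\lambda$-calculus, then $t$ is strongly normalizing with respect to $\to_{\mathsf{dist}}$.
   Context: Terms: $t,s,u ::= x \mid \lambda x.t \mid ts \mid \langle t,s\rangle \mid \pi_1 t \mid \pi_2 t$ (up to $\alpha$-renaming); $t\{x:=s\}$ is capture-avoiding substitution. Top-level rules: $(\lambda x.t)s \mapsto t\{x:=s\}$; $\pi_i\langle t_1,t_2\rangle \mapsto t_i$ ($i=1,2$); $\langle t,s\rangle u \mapsto \langle tu, su\rangle$; $\pi_i(\lambda x.t)\mapsto \lambda x.\pi_i t$ ($i=1,2$); $\to_{\mathsf{dist}}$ is the closure of these rules under all term constructors. Types: $A ::= \tau \mid A\Rightarrow A \mid A\wedge A$ with $\tau$ a single atomic type. The relation $\equiv$ on types is the smallest equivalence relation containing $A\Rightarrow (B\wedge C)\equiv (A\Rightarrow B)\wedge(A\Rightarrow C)$ for all $A,B,C$ and closed under congruence for $\Rightarrow$ and $\wedge$ in both arguments. Typing rules: $\Gamma,x:A\vdash x:A$; if $\Gamma\vdash t:A$ and $A\equiv B$ then $\Gamma\vdash t:B$; if $\Gamma,x:A\vdash t:B$ then $\Gamma\vdash \lambda x.t:A\Rightarrow B$; if $\Gamma\vdash t:A\Rightarrow B$ and $\Gamma\vdash s:A$ then $\Gamma\vdash ts:B$; if $\Gamma\vdash t:A$ and $\Gamma\vdash s:B$ then $\Gamma\vdash\langle t,s\rangle:A\wedge B$; if $\Gamma\vdash t:A\wedge B$ then $\Gamma\vdash\pi_1 t:A$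 and $\Gamma\vdash \pi_2 t:B$. *)

theory Defs
  imports Main
begin

text \<open>Terms up to alpha-renaming, represented with de Bruijn indices.\<close>
datatype dterm =
    Var nat
  | Lam dterm
  | App dterm dterm
  | Pair dterm dterm
  | Proj1 dterm
  | Proj2 dterm

primrec lift :: "dterm \<Rightarrow> nat \<Rightarrow> dterm" where
  "lift (Var i) k = (if i < k then Var i else Var (i + 1))"
| "lift (Lam t) k = Lam (lift t (k + 1))"
| "lift (App t s) k = App (lift t k) (lift s k)"
| "lift (Pair t s) k = Pair (lift t k) (lift s k)"
| "lift (Proj1 t) k = Proj1 (lift t k)"
| "lift (Proj2 t) k = Proj2 (lift t k)"

text \<open>Capture-avoiding substitution: subst t s k replaces index k by s
  and decrements the free indices above k.\<close>
primrec subst :: "dterm \<Rightarrow> dterm \<Rightarrow> nat \<Rightarrow> dterm" where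
  "subst (Var i) s k = (if k < i then Var (i - 1) else if i = k then s else Var i)"
| "subst (Lam t) s k = Lam (subst t (lift s 0) (k + 1))"
| "subst (App t u) s k = App (subst t s k) (subst u s k)"
| "subst (Pair t u) s k = Pair (subst t s k) (subst u s k)"
| "subst (Proj1 t) s k = Proj1 (subst t s k)"
| "subst (Proj2 t) s k = Proj2 (subst t s k)"

inductive dist_step :: "dterm \<Rightarrow> dterm \<Rightarrow> bool" (infixl "\<rightarrow>\<^sub>d" 50) where
  beta:      "App (Lam t) s \<rightarrow>\<^sub>d subst t s 0"
| proj1_pair: "Proj1 (Pair t1 t2) \<rightarrow>\<^sub>d t1"
| proj2_pair: "Proj2 (Pair t1 t2) \<rightarrow>\<^sub>d t2"
| app_pair:  "App (Pair t s) u \<rightarrow>\<^sub>d Pair (App t u) (App s u)"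
| proj1_lam: "Proj1 (Lam t) \<rightarrow>\<^sub>d Lam (Proj1 t)"
| proj2_lam: "Proj2 (Lam t) \<rightarrow>\<^sub>d Lam (Proj2 t)"
| lam:   "t \<rightarrow>\<^sub>d t' \<Longrightarrow> Lam t \<rightarrow>\<^sub>d Lam t'"
| appL:  "t \<rightarrow>\<^sub>d t' \<Longrightarrow> App t s \<rightarrow>\<^sub>d App t' s"
| appR:  "s \<rightarrow>\<^sub>d s' \<Longrightarrow> App t s \<rightarrow>\<^sub>d App t s'"
| pairL: "t \<rightarrow>\<^sub>d t' \<Longrightarrow> Pair t s \<rightarrow>\<^sub>d Pair t' s"
| pairR: "s \<rightarrow>\<^sub>d s' \<Longrightarrow> Pair t s \<rightarrow>\<^sub>d Pair t s'"
| proj1: "t \<rightarrow>\<^sub>d t' \<Longrightarrow> Proj1 t \<rightarrow>\<^sub>d Proj1 t'"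
| proj2: "t \<rightarrow>\<^sub>d t' \<Longrightarrow> Proj2 t \<rightarrow>\<^sub>d Proj2 t'"

text \<open>Strong normalization: every reduction sequence from t is finite
  (t is in the well-founded part of the reduction relation).\<close>
inductive SN :: "dterm \<Rightarrow> bool" where
  SNI: "(\<And>t'. t \<rightarrow>\<^sub>d t' \<Longrightarrow> SN t') \<Longrightarrow> SN t"

datatype type = Atom | Fun type type | Conj type type

inductive type_eq :: "type \<Rightarrow> type \<Rightarrow> bool" (infix "\<equiv>\<^sub>T" 50) where
  dist:  "Fun A (Conj B C) \<equiv>\<^sub>T Conj (Fun A B) (Fun A C)"
| refl:  "A \<equiv>\<^sub>T A"
| sym:   "A \<equiv>\<^sub>T B \<Longrightarrow> B \<equiv>\<^sub>T A"
| trans: "A \<equiv>\<^sub>T B \<Longrightarrow> B \<equiv>\<^sub>T C \<Longrightarrow> A \<equiv>\<^sub>T C"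
| fun_cong:  "A \<equiv>\<^sub>T A' \<Longrightarrow> B \<equiv>\<^sub>T B' \<Longrightarrow> Fun A B \<equiv>\<^sub>T Fun A' B'"
| conj_cong: "A \<equiv>\<^sub>T A' \<Longrightarrow> B \<equiv>\<^sub>T B' \<Longrightarrow> Conj A B \<equiv>\<^sub>T Conj A' B'"

definition cons_env :: "type \<Rightarrow> (nat \<Rightarrow> type) \<Rightarrow> nat \<Rightarrow> type" where
  "cons_env A \<Gamma> = (\<lambda>j. case j of 0 \<Rightarrow> A | Suc n \<Rightarrow> \<Gamma> n)"

inductive typing :: "(nat \<Rightarrow> type) \<Rightarrow> dterm \<Rightarrow> type \<Rightarrow> bool" ("_ \<turnstile> _ : _" [50, 50, 50] 50) where
  var:   "\<Gamma> \<turnstile> Var i : \<Gamma> i"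
| conv:  "\<Gamma> \<turnstile> t : A \<Longrightarrow> A \<equiv>\<^sub>T B \<Longrightarrow> \<Gamma> \<turnstile> t : B"
| abs:   "cons_env A \<Gamma> \<turnstile> t : B \<Longrightarrow> \<Gamma> \<turnstile> Lam t : Fun A B"
| app:   "\<Gamma> \<turnstile> t : Fun A B \<Longrightarrow> \<Gamma> \<turnstile> s : A \<Longrightarrow> \<Gamma> \<turnstile> App t s : B"
| pair:  "\<Gamma> \<turnstile> t : A \<Longrightarrow> \<Gamma> \<turnstile> s : B \<Longrightarrow> \<Gamma> \<turnstile> Pair t s : Conj A B"
| proj1: "\<Gamma> \<turnstile> t : Conj A B \<Longrightarrow> \<Gamma> \<turnstile> Proj1 t : A"
| proj2: "\<Gamma> \<turnstile> t : Conj A B \<Longrightarrow> \<Gamma> \<turnstile> Proj2 t : B"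

end

theory Submission
  imports Defs
begin

section \<open>De Bruijn lemmas\<close>

lemma lift_lift: "i < k + 1 \<Longrightarrow> lift (lift t i) (Suc k) = lift (lift t k) i"
  by (induct t arbitrary: i k) auto

lemma lift_subst [simp]: "j < i + 1 \<Longrightarrow> lift (subst t s j) i = subst (lift t (i + 1)) (lift s i) j"
  by (induct t arbitrary: i j s) (simp_all add: diff_Suc lift_lift split: nat.split)

lemma lift_subst_lt: "i < j + 1 \<Longrightarrow> lift (subst t s j) i = subst (lift t i) (lift s i) (j + 1)"
  by (induct t arbitrary: i j s) (auto simp: lift_lift)

lemma subst_lift [simp]: "subst (lift t k) s k = t"
  by (induct t arbitrary: k s) simp_all

lemma subst_subst: "i < j + 1 \<Longrightarrow> subst (subst t (lift v i) (Suc j)) (subst u v j) i = subst (subst t u i) v j"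
  by (induct t arbitrary: i j u v) (simp_all add: diff_Suc lift_lift [symmetric] lift_subst_lt split: nat.split)

lemma step_subst: "t \<rightarrow>\<^sub>d t' \<Longrightarrow> subst t s k \<rightarrow>\<^sub>d subst t' s k"
proof (induct arbitrary: s k rule: dist_step.induct)
  case (beta t u)
  have "subst (App (Lam t) u) s k \<rightarrow>\<^sub>d subst (subst t (lift s 0) (Suc k)) (subst u s k) 0"
    by (simp add: dist_step.beta)
  then show ?case using subst_subst[of 0 k t s u] by simp
qed (auto intro: dist_step.intros)

section \<open>Parallel substitution\<close>

definition shift :: "(nat \<Rightarrow> dterm) \<Rightarrow> nat \<Rightarrow> dterm" where
  "shift \<sigma> = (\<lambda>i. case i of 0 \<Rightarrow> Var 0 | Suc j \<Rightarrow> lift (\<sigma> j) 0)"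

definition scons :: "dterm \<Rightarrow> (nat \<Rightarrow> dterm) \<Rightarrow> nat \<Rightarrow> dterm" where
  "scons s \<sigma> = (\<lambda>i. case i of 0 \<Rightarrow> s | Suc j \<Rightarrow> \<sigma> j)"

primrec psubst :: "dterm \<Rightarrow> (nat \<Rightarrow> dterm) \<Rightarrow> dterm" where
  "psubst (Var i) \<sigma> = \<sigma> i"
| "psubst (Lam t) \<sigma> = Lam (psubst t (shift \<sigma>))"
| "psubst (App t s) \<sigma> = App (psubst t \<sigma>) (psubst s \<sigma>)"
| "psubst (Pair t s) \<sigma> = Pair (psubst t \<sigma>) (psubst s \<sigma>)"
| "psubst (Proj1 t) \<sigma> = Proj1 (psubst t \<sigma>)"
| "psubst (Proj2 t) \<sigma> = Proj2 (psubst t \<sigma>)"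

primrec liftn :: "nat \<Rightarrow> dterm \<Rightarrow> dterm" where
  "liftn 0 s = s"
| "liftn (Suc k) s = lift (liftn k s) 0"

lemma liftn_Var: "liftn k (Var i) = Var (i + k)"
  by (induct k) auto

lemma liftn_lift: "liftn k (lift x 0) = lift (liftn k x) k"
  by (induct k) (auto simp: lift_lift)

lemma shiftn: "(shift ^^ k) \<rho> i = (if i < k then Var i else liftn k (\<rho> (i - k)))"
proof (induct k arbitrary: i)
  case 0 then show ?case by simp
next
  case (Suc k)
  show ?case
  proof (cases i)
    case 0 then show ?thesis by (simp add: shift_def)
  next
    case (Suc j) then show ?thesis using Suc.hyps[of j] by (auto simp: shift_def)
  qed
qed

lemma subst_psubst_gen:
  "subst (psubst t ((shift ^^ k) (shift \<sigma>))) (liftn k s) k = psubst t ((shift ^^ k) (scons s \<sigma>))"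
proof (induct t arbitrary: k)
  case (Var i)
  show ?case
  proof (cases "i < k")
    case True then show ?thesis by (simp add: shiftn)
  next
    case False
    show ?thesis
    proof (cases "i = k")
      case True then show ?thesis by (simp add: shiftn liftn_Var) (simp add: shift_def scons_def liftn_Var)
    next
      case False
      with \<open>\<not> i < k\<close> obtain j where j: "i - k = Suc j" by (metis Suc_diff_Suc linorder_neqE_nat)
      then show ?thesis using \<open>\<not> i < k\<close> by (simp add: shiftn) (simp add: shift_def scons_def liftn_lift)
    qed
  qed
next
  case (Lam t)
  then show ?case using Lam[of "Suc k"] by simp
qed simp_all

lemma subst_psubst: "subst (psubst t (shift \<sigma>)) s 0 = psubst t (scons s \<sigma>)"
  using subst_psubst_gen[of t 0 \<sigma> s] by simp

lemma shift_Var: "shift Var = Var"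
  by (auto simp: shift_def split: nat.split)

lemma psubst_Var: "psubst t Var = t"
  by (induct t) (simp_all add: shift_Var)


inductive_cases step_VarE: "Var i \<rightarrow>\<^sub>d t'"
inductive_cases step_LamE: "Lam t \<rightarrow>\<^sub>d t'"
inductive_cases step_AppE: "App t s \<rightarrow>\<^sub>d t'"
inductive_cases step_PairE: "Pair t s \<rightarrow>\<^sub>d t'"
inductive_cases step_Proj1E: "Proj1 t \<rightarrow>\<^sub>d t'"
inductive_cases step_Proj2E: "Proj2 t \<rightarrow>\<^sub>d t'"

lemma SN_step: "SN t \<Longrightarrow> t \<rightarrow>\<^sub>d t' \<Longrightarrow> SN t'"
  by (auto elim: SN.cases)

lemma SN_App1: "SN u \<Longrightarrow> u = App t s \<Longrightarrow> SN t"
proof (induct arbitrary: t rule: SN.induct)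
  case (SNI u)
  show ?case by (rule SN.SNI) (use SNI in \<open>blast intro: dist_step.appL\<close>)
qed

lemma SN_Proj1: "SN u \<Longrightarrow> u = Proj1 t \<Longrightarrow> SN t"
proof (induct arbitrary: t rule: SN.induct)
  case (SNI u)
  show ?case by (rule SN.SNI) (use SNI in \<open>blast intro: dist_step.proj1\<close>)
qed

lemma SN_subst: "SN u \<Longrightarrow> u = subst t s k \<Longrightarrow> SN t"
proof (induct arbitrary: t rule: SN.induct)
  case (SNI u)
  show ?case by (rule SN.SNI) (use SNI in \<open>blast intro: step_subst\<close>)
qed

definition neutral :: "dterm \<Rightarrow> bool" where
  "neutral t = (case t of Lam _ \<Rightarrow> False | Pair _ _ \<Rightarrow> False | _ \<Rightarrow> True)"

section \<open>Reducibility\<close>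

fun distr :: "type \<Rightarrow> type \<Rightarrow> type" where
  "distr D (Conj X Y) = Conj (distr D X) (distr D Y)"
| "distr D X = Fun D X"

primrec nf :: "type \<Rightarrow> type" where
  "nf Atom = Atom"
| "nf (Fun A B) = distr (nf A) (nf B)"
| "nf (Conj A B) = Conj (nf A) (nf B)"

lemma nf_eq: "A \<equiv>\<^sub>T B \<Longrightarrow> nf A = nf B"
  by (induct rule: type_eq.induct) auto

primrec Red :: "type \<Rightarrow> dterm set" where
  "Red Atom = {t. SN t}"
| "Red (Fun A B) = {t. \<forall>s\<in>Red A. App t s \<in> Red B}"
| "Red (Conj A B) = {t. Proj1 t \<in> Red A \<and> Proj2 t \<in> Red B}"

definition CR :: "type \<Rightarrow> bool" where
  "CR T = ((\<forall>t\<in>Red T. SN t) \<and> (\<forall>t t'. t \<in> Red T \<longrightarrow> t \<rightarrow>\<^sub>d t' \<longrightarrow> t' \<in> Red T)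
     \<and> (\<forall>t. neutral t \<longrightarrow> (\<forall>t'. t \<rightarrow>\<^sub>d t' \<longrightarrow> t' \<in> Red T) \<longrightarrow> t \<in> Red T))"

lemma CR_all: "CR T"
proof (induct T)
  case Atom
  show ?case unfolding CR_def by (auto intro: SN.SNI SN_step)
next
  case (Fun D P)
  have D1: "\<And>t. t \<in> Red D \<Longrightarrow> SN t" and D2: "\<And>t t'. t \<in> Red D \<Longrightarrow> t \<rightarrow>\<^sub>d t' \<Longrightarrow> t' \<in> Red D"
    and D3: "\<And>t. neutral t \<Longrightarrow> (\<And>t'. t \<rightarrow>\<^sub>d t' \<Longrightarrow> t' \<in> Red D) \<Longrightarrow> t \<in> Red D"
    using Fun(1) unfolding CR_def by blast+
  have P1: "\<And>t. t \<in> Red P \<Longrightarrow> SN t" and P2: "\<And>t t'. t \<in> Red P \<Longrightarrow> t \<rightarrow>\<^sub>d t' \<Longrightarrow> t' \<in> Red P"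
    and P3: "\<And>t. neutral t \<Longrightarrow> (\<And>t'. t \<rightarrow>\<^sub>d t' \<Longrightarrow> t' \<in> Red P) \<Longrightarrow> t \<in> Red P"
    using Fun(2) unfolding CR_def by blast+
  have V: "Var 0 \<in> Red D" by (rule D3) (auto simp: neutral_def elim: step_VarE)
  have c1: "SN t" if "t \<in> Red (Fun D P)" for t
    using that V P1 SN_App1[OF _ HOL.refl, of t "Var 0"] by auto
  have c2: "t' \<in> Red (Fun D P)" if "t \<in> Red (Fun D P)" "t \<rightarrow>\<^sub>d t'" for t t'
    using that P2 dist_step.appL by auto
  have c3: "t \<in> Red (Fun D P)" if n: "neutral t" and r: "\<And>t'. t \<rightarrow>\<^sub>d t' \<Longrightarrow> t' \<in> Red (Fun D P)" for t
  proof -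
    have "SN s \<Longrightarrow> s \<in> Red D \<Longrightarrow> App t s \<in> Red P" for s
    proof (induct rule: SN.induct)
      case (SNI s)
      show ?case
      proof (rule P3)
        show "neutral (App t s)" by (simp add: neutral_def)
        fix w assume "App t s \<rightarrow>\<^sub>d w"
        then show "w \<in> Red P"
          by (cases rule: step_AppE) (use n r SNI D2 in \<open>auto simp: neutral_def\<close>)
      qed
    qed
    then show ?thesis using D1 by auto
  qed
  show ?case unfolding CR_def using c1 c2 c3 by blast
next
  case (Conj X Y)
  have X2: "\<And>t t'. t \<in> Red X \<Longrightarrow> t \<rightarrow>\<^sub>d t' \<Longrightarrow> t' \<in> Red X"
    and X3: "\<And>t. neutral t \<Longrightarrow> (\<And>t'. t \<rightarrow>\<^sub>d t' \<Longrightarrow> t' \<in> Red X) \<Longrightarrow> t \<in> Red X"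
    and X1: "\<And>t. t \<in> Red X \<Longrightarrow> SN t"
    using Conj(1) unfolding CR_def by blast+
  have Y2: "\<And>t t'. t \<in> Red Y \<Longrightarrow> t \<rightarrow>\<^sub>d t' \<Longrightarrow> t' \<in> Red Y"
    and Y3: "\<And>t. neutral t \<Longrightarrow> (\<And>t'. t \<rightarrow>\<^sub>d t' \<Longrightarrow> t' \<in> Red Y) \<Longrightarrow> t \<in> Red Y"
    using Conj(2) unfolding CR_def by blast+
  have c1: "SN t" if "t \<in> Red (Conj X Y)" for t
    using that X1 SN_Proj1 by auto
  have c2: "t' \<in> Red (Conj X Y)" if "t \<in> Red (Conj X Y)" "t \<rightarrow>\<^sub>d t'" for t t'
    using that X2 Y2 dist_step.proj1 dist_step.proj2 by auto
  have c3: "t \<in> Red (Conj X Y)" if n: "neutral t" and r: "\<And>t'. t \<rightarrow>\<^sub>d t' \<Longrightarrow> t' \<in> Red (Conj X Y)" for t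
  proof -
    have "Proj1 t \<in> Red X"
    proof (rule X3)
      show "neutral (Proj1 t)" by (simp add: neutral_def)
      fix w assume "Proj1 t \<rightarrow>\<^sub>d w"
      then show "w \<in> Red X"
        by (cases rule: step_Proj1E) (use n r in \<open>auto simp: neutral_def\<close>)
    qed
    moreover have "Proj2 t \<in> Red Y"
    proof (rule Y3)
      show "neutral (Proj2 t)" by (simp add: neutral_def)
      fix w assume "Proj2 t \<rightarrow>\<^sub>d w"
      then show "w \<in> Red Y"
        by (cases rule: step_Proj2E) (use n r in \<open>auto simp: neutral_def\<close>)
    qed
    ultimately show ?thesis by simp
  qed
  show ?case unfolding CR_def using c1 c2 c3 by blast
qed

lemma CR1: "t \<in> Red T \<Longrightarrow> SN t"
  using CR_all unfolding CR_def by blast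

lemma CR2: "t \<in> Red T \<Longrightarrow> t \<rightarrow>\<^sub>d t' \<Longrightarrow> t' \<in> Red T"
  using CR_all unfolding CR_def by blast

lemma CR3: "neutral t \<Longrightarrow> (\<And>t'. t \<rightarrow>\<^sub>d t' \<Longrightarrow> t' \<in> Red T) \<Longrightarrow> t \<in> Red T"
  using CR_all unfolding CR_def by blast

lemma Var_Red: "Var i \<in> Red T"
  by (rule CR3) (auto simp: neutral_def elim: step_VarE)


lemma proj1_pair_Red: "SN a \<Longrightarrow> a \<in> Red X \<Longrightarrow> SN b \<Longrightarrow> Proj1 (Pair a b) \<in> Red X"
proof (induct arbitrary: b rule: SN.induct)
  case (SNI a)
  note O = SNI
  from SNI(4) show ?case
  proof (induct rule: SN.induct)
    case (SNI b)
    note SNI2 = SNI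
    show ?case
    proof (rule CR3)
      show "neutral (Proj1 (Pair a b))" by (simp add: neutral_def)
      fix w assume "Proj1 (Pair a b) \<rightarrow>\<^sub>d w"
      then show "w \<in> Red X"
        by (cases rule: step_Proj1E) (use O(3) in \<open>auto elim!: step_PairE step_LamE intro: O SNI2 CR2 SN.SNI\<close>)
    qed
  qed
qed

lemma proj2_pair_Red: "SN b \<Longrightarrow> b \<in> Red X \<Longrightarrow> SN a \<Longrightarrow> Proj2 (Pair a b) \<in> Red X"
proof (induct arbitrary: a rule: SN.induct)
  case (SNI b)
  note O = SNI
  from SNI(4) show ?case
  proof (induct rule: SN.induct)
    case (SNI a)
    note SNI2 = SNI
    show ?case
    proof (rule CR3)
      show "neutral (Proj2 (Pair a b))" by (simp add: neutral_def)
      fix w assume "Proj2 (Pair a b) \<rightarrow>\<^sub>d w"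
      then show "w \<in> Red X"
        by (cases rule: step_Proj2E) (use O(3) in \<open>auto elim!: step_PairE step_LamE intro: O SNI2 CR2 SN.SNI\<close>)
    qed
  qed
qed

lemma proj_app_Red:
  "SN t \<Longrightarrow> SN s \<Longrightarrow> App (Proj1 t) s \<in> Red X \<Longrightarrow> App (Proj2 t) s \<in> Red Y
   \<Longrightarrow> Proj1 (App t s) \<in> Red X \<and> Proj2 (App t s) \<in> Red Y"
proof (induct arbitrary: s rule: SN.induct)
  case (SNI t)
  note O = SNI
  from SNI(3,4,5) show ?case
  proof (induct rule: SN.induct)
    case (SNI s)
    note SNI2 = SNI
    have hd: "w \<in> Red X \<and> w2 \<in> Red Y"
      if "App t s \<rightarrow>\<^sub>d w'" "w = Proj1 w'" "w2 = Proj2 w'" for w w' w2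
    proof (rule step_AppE[OF that(1)])
      fix u assume 1: "t = Lam u" "w' = subst u s 0"
      have a: "App (Proj1 (Lam u)) s \<rightarrow>\<^sub>d App (Lam (Proj1 u)) s" by (intro dist_step.intros)
      have b: "App (Lam (Proj1 u)) s \<rightarrow>\<^sub>d Proj1 (subst u s 0)"
        using dist_step.beta[of "Proj1 u" s] by simp
      have a2: "App (Proj2 (Lam u)) s \<rightarrow>\<^sub>d App (Lam (Proj2 u)) s" by (intro dist_step.intros)
      have b2: "App (Lam (Proj2 u)) s \<rightarrow>\<^sub>d Proj2 (subst u s 0)"
        using dist_step.beta[of "Proj2 u" s] by simp
      show ?thesis using 1 that SNI2(3,4) a b a2 b2 by (auto intro: CR2)
    next
      fix a b assume 2: "t = dterm.Pair a b" "w' = dterm.Pair (App a s) (App b s)"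
      have ra: "App a s \<in> Red X"
        using SNI2(3) 2 by (auto intro: CR2 dist_step.intros)
      have rb: "App b s \<in> Red Y"
        using SNI2(4) 2 by (auto intro: CR2 dist_step.intros)
      show ?thesis using 2 that ra rb CR1[OF ra] CR1[OF rb] proj1_pair_Red proj2_pair_Red by auto
    next
      fix t' assume 3: "w' = App t' s" "t \<rightarrow>\<^sub>d t'"
      have "App (Proj1 t) s \<rightarrow>\<^sub>d App (Proj1 t') s" "App (Proj2 t) s \<rightarrow>\<^sub>d App (Proj2 t') s"
        using 3 by (auto intro: dist_step.intros)
      then show ?thesis using O(2)[of t' s] 3 that SNI2(3,4) SN.SNI[OF SNI2(1)] by (auto intro: CR2 SN.SNI)
    next
      fix s' assume 4: "w' = App t s'" "s \<rightarrow>\<^sub>d s'"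
      have "App (Proj1 t) s \<rightarrow>\<^sub>d App (Proj1 t) s'" "App (Proj2 t) s \<rightarrow>\<^sub>d App (Proj2 t) s'"
        using 4 by (auto intro: dist_step.intros)
      then show ?thesis using SNI2(2)[of s'] 4 that SNI2(3,4) by (auto intro: CR2)
    qed
    have "Proj1 (App t s) \<in> Red X"
    proof (rule CR3)
      show "neutral (Proj1 (App t s))" by (simp add: neutral_def)
      fix w assume "Proj1 (App t s) \<rightarrow>\<^sub>d w"
      then show "w \<in> Red X" by (cases rule: step_Proj1E) (use hd in auto)
    qed
    moreover have "Proj2 (App t s) \<in> Red Y"
    proof (rule CR3)
      show "neutral (Proj2 (App t s))" by (simp add: neutral_def)
      fix w assume "Proj2 (App t s) \<rightarrow>\<^sub>d w"
      then show "w \<in> Red Y" by (cases rule: step_Proj2E) (use hd in auto)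
    qed
    ultimately show ?case ..
  qed
qed


lemma app_distr: "t \<in> Red (distr D X) \<Longrightarrow> s \<in> Red D \<Longrightarrow> App t s \<in> Red X"
proof (induct X arbitrary: t)
  case (Conj X1 X2)
  have "App (Proj1 t) s \<in> Red X1" "App (Proj2 t) s \<in> Red X2"
    using Conj by auto
  then show ?case using proj_app_Red[OF CR1[OF Conj(3)] CR1[OF Conj(4)]] by simp
qed auto

lemma abs_fun: "SN u \<Longrightarrow> SN s \<Longrightarrow> s \<in> Red D \<Longrightarrow> (\<forall>s\<in>Red D. subst u s 0 \<in> Red X)
  \<Longrightarrow> App (Lam u) s \<in> Red X"
proof (induct arbitrary: s rule: SN.induct)
  case (SNI u)
  note O = SNI
  from SNI(3,4,5) show ?case
  proof (induct rule: SN.induct)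
    case (SNI s)
    show ?case
    proof (rule CR3)
      show "neutral (App (Lam u) s)" by (simp add: neutral_def)
      fix w assume "App (Lam u) s \<rightarrow>\<^sub>d w"
      then show "w \<in> Red X"
      proof (rule step_AppE)
        fix u' assume "Lam u = Lam u'" "w = subst u' s 0"
        then show ?thesis using SNI by auto
      next
        fix t' assume a: "w = App t' s" "Lam u \<rightarrow>\<^sub>d t'"
        from a(2) obtain u' where "t' = Lam u'" "u \<rightarrow>\<^sub>d u'" by (auto elim: step_LamE)
        moreover have "\<forall>s\<in>Red D. subst u' s 0 \<in> Red X"
          using O(5) \<open>u \<rightarrow>\<^sub>d u'\<close> CR2 step_subst by blast
        ultimately show ?thesis using O(2)[of u' s] a SNI(3) SN.SNI[OF SNI(1)] by auto
      next
        fix s' assume "w = App (Lam u) s'" "s \<rightarrow>\<^sub>d s'"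
        then show ?thesis using SNI CR2 by auto
      qed auto
    qed
  qed
qed

lemma SN_of_subst_Red: "\<forall>s\<in>Red D. subst u s 0 \<in> Red X \<Longrightarrow> SN u"
  using Var_Red[of 0 D] CR1 SN_subst[OF _ HOL.refl] by blast

lemma abs_distr: "\<forall>s\<in>Red D. subst u s 0 \<in> Red X \<Longrightarrow> Lam u \<in> Red (distr D X)"
proof (induct X arbitrary: u)
  case (Conj X1 X2)
  have SNu: "SN u" using SN_of_subst_Red[OF Conj(3)] .
  have "SN u \<Longrightarrow> \<forall>s\<in>Red D. subst u s 0 \<in> Red (Conj X1 X2) \<Longrightarrow>
     Proj1 (Lam u) \<in> Red (distr D X1) \<and> Proj2 (Lam u) \<in> Red (distr D X2)"
  proof (induct rule: SN.induct)
    case (SNI u)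
    have H': "\<forall>s\<in>Red D. subst u' s 0 \<in> Red (Conj X1 X2)" if "u \<rightarrow>\<^sub>d u'" for u'
    proof
      fix s assume "s \<in> Red D"
      then have "subst u s 0 \<in> Red (Conj X1 X2)" using SNI(3) by blast
      then show "subst u' s 0 \<in> Red (Conj X1 X2)" using CR2 step_subst[OF that] by blast
    qed
    have L1: "Lam (Proj1 u) \<in> Red (distr D X1)"
      by (rule Conj(1)) (use SNI(3) in auto)
    have L2: "Lam (Proj2 u) \<in> Red (distr D X2)"
      by (rule Conj(2)) (use SNI(3) in auto)
    have "Proj1 (Lam u) \<in> Red (distr D X1)"
    proof (rule CR3)
      show "neutral (Proj1 (Lam u))" by (simp add: neutral_def)
      fix w assume "Proj1 (Lam u) \<rightarrow>\<^sub>d w"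
      then show "w \<in> Red (distr D X1)"
        by (rule step_Proj1E) (use L1 SNI(2) H' in \<open>auto elim!: step_LamE\<close>)
    qed
    moreover have "Proj2 (Lam u) \<in> Red (distr D X2)"
    proof (rule CR3)
      show "neutral (Proj2 (Lam u))" by (simp add: neutral_def)
      fix w assume "Proj2 (Lam u) \<rightarrow>\<^sub>d w"
      then show "w \<in> Red (distr D X2)"
        by (rule step_Proj2E) (use L2 SNI(2) H' in \<open>auto elim!: step_LamE\<close>)
    qed
    ultimately show ?case ..
  qed
  then show ?case using SNu Conj(3) by simp
next
  case Atom
  have "App (Lam u) s \<in> Red Atom" if "s \<in> Red D" for s
    using abs_fun[OF SN_of_subst_Red[OF Atom] CR1[OF that] that Atom] .
  then show ?case by simp
next
  case (Fun X1 X2)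
  have "App (Lam u) s \<in> Red (Fun X1 X2)" if "s \<in> Red D" for s
    using abs_fun[OF SN_of_subst_Red[OF Fun(3)] CR1[OF that] that Fun(3)] .
  then show ?case by (simp only: distr.simps Red.simps(2) mem_Collect_eq) blast
qed

section \<open>Fundamental lemma\<close>

lemma fundamental: "\<Gamma> \<turnstile> t : A \<Longrightarrow> (\<forall>i. \<sigma> i \<in> Red (nf (\<Gamma> i))) \<Longrightarrow> psubst t \<sigma> \<in> Red (nf A)"
proof (induct arbitrary: \<sigma> rule: typing.induct)
  case (var \<Gamma> i)
  then show ?case by simp
next
  case (conv \<Gamma> t A B)
  then show ?case using nf_eq by metis
next
  case (abs A \<Gamma> t B)
  have "\<forall>s\<in>Red (nf A). subst (psubst t (shift \<sigma>)) s 0 \<in> Red (nf B)"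
  proof
    fix s assume s: "s \<in> Red (nf A)"
    have "\<forall>i. scons s \<sigma> i \<in> Red (nf (cons_env A \<Gamma> i))"
      using s abs(3) by (auto simp: scons_def cons_env_def split: nat.split)
    then show "subst (psubst t (shift \<sigma>)) s 0 \<in> Red (nf B)"
      using abs(2) by (simp add: subst_psubst)
  qed
  then show ?case by (simp add: abs_distr)
next
  case (app \<Gamma> t A B s)
  show ?case using app_distr[OF app(2)[OF app(5), simplified] app(4)[OF app(5)]] by simp
next
  case (pair \<Gamma> t A s B)
  have a: "psubst t \<sigma> \<in> Red (nf A)" and b: "psubst s \<sigma> \<in> Red (nf B)" using pair by auto
  show ?case using proj1_pair_Red[OF CR1[OF a] a CR1[OF b]] proj2_pair_Red[OF CR1[OF b] b CR1[OF a]]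
    by simp
next
  case (proj1 \<Gamma> t A B)
  then show ?case by simp
next
  case (proj2 \<Gamma> t A B)
  then show ?case by simp
qed

theorem theorem4:
  assumes "\<Gamma> \<turnstile> t : A"
  shows "SN t"
proof -
  have "psubst t Var \<in> Red (nf A)"
    using fundamental[OF assms, of Var] Var_Red by blast
  then show ?thesis using CR1 psubst_Var by metis
qed

end
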